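(* Let $\mathbf{A}\in\mathbb{R}^{M\times N}$, $\mathbf{Y}\in\mathbb{R}^{M\times L}$, and let $(\mathbf{g}(t),\mathbf{V}(t))$, $t\ge0$, evolve under the continuous gradient flow of $\mathcal{L}(\mathbf{g},\mathbf{V})=\Vert\mathbf{Y}-\mathbf{A}((\mathbf{g}^{\odot 2}\mathbf{1}_L)\odot\mathbf{V})\Vert_F^2$, and assume perfect row balancedness: $\frac12 g_i^2(t)=\sum_{j\in[L]}V_{ij}^2(t)$ for all $i\in[N]$ and all $t\ge0$. Let $\mathbf{X}(t)=(\mathbf{g}(t)^{\odot 2}\mathbf{1}_L)\odot\mathbf{V}(t)$, $\boldsymbol{\Lambda}(t)=\mathbf{A}^\top(\mathbf{Y}-\mathbf{A}\mathbf{X}(t))$ with $i$-th row $\boldsymbol{\lambda}_i(t)$, and $\hat{\mathbf{x}}_i(t)=\mathbf{X}_{i:}(t)/\Vert\mathbf{X}_{i:}(t)\Vert_2$ if $\mathbf{X}_{i:}(t)\neq\mathbf 0$, $\hat{\mathbf{x}}_i(t)=\mathbf{0}$ otherwise. Then the rate of change of the Euclidean norm of the $i$-th row of $\mathbf{X}(t)$ satisfies $$\frac{d}{dt}\Vert\mathbf{X}_{i:}(t)\Vert_2=2^{2/3}\cdot 6\,\langle\boldsymbol{\lambda}_i(t),\hat{\mathbf{x}}_i(t)\rangle\,\Vert\mathbf{X}_{i:}(t)\Vert_2^{4/3}.$$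
   Context: $\odot$ is the entrywise product and $\mathbf{1}_L$ the $1\times L$ all-ones row vector, so $X_{ij}=g_i^2V_{ij}$; $\mathbf{X}_{i:}$ is the $i$-th row. Gradient flow: $\frac{d}{dt}g_l=-\partial\mathcal{L}/\partial g_l$, $\frac{d}{dt}V_{lm}=-\partial\mathcal{L}/\partial V_{lm}$ along the curve. *)

theory Defs
  imports "HOL-Analysis.Analysis"
begin

definition Xmat :: "real^'n \<Rightarrow> real^'l^'n \<Rightarrow> real^'l^'n" where
  "Xmat g V = (\<chi> i j. (g $ i)^2 * (V $ i $ j))"

definition loss :: "real^'n^'m \<Rightarrow> real^'l^'m \<Rightarrow> real^'n \<Rightarrow> real^'l^'n \<Rightarrow> real" where
  "loss A Y g V = (\<Sum>i\<in>UNIV. \<Sum>j\<in>UNIV. ((Y - A ** Xmat g V) $ i $ j)^2)"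

definition vupd :: "real^'n \<Rightarrow> 'n \<Rightarrow> real \<Rightarrow> real^'n" where
  "vupd v k u = (\<chi> i. if i = k then u else v $ i)"

definition mupd :: "real^'l^'n \<Rightarrow> 'n \<Rightarrow> 'l \<Rightarrow> real \<Rightarrow> real^'l^'n" where
  "mupd W k m u = (\<chi> i j. if i = k \<and> j = m then u else W $ i $ j)"

definition gradient_flow ::
  "real^'n^'m \<Rightarrow> real^'l^'m \<Rightarrow> (real \<Rightarrow> real^'n) \<Rightarrow> (real \<Rightarrow> real^'l^'n) \<Rightarrow> bool" where
  "gradient_flow A Y g V \<longleftrightarrow>
     (\<forall>t\<ge>0. \<forall>l.
        ((\<lambda>s. g s $ l) has_real_derivative
            - deriv (\<lambda>u. loss A Y (vupd (g t) l u) (V t)) (g t $ l)) (at t within {0..})) \<and>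
     (\<forall>t\<ge>0. \<forall>l m.
        ((\<lambda>s. V s $ l $ m) has_real_derivative
            - deriv (\<lambda>u. loss A Y (g t) (mupd (V t) l m u)) (V t $ l $ m)) (at t within {0..}))"

definition xhat :: "real^'l \<Rightarrow> real^'l" where
  "xhat x = (if x \<noteq> 0 then x /\<^sub>R norm x else 0)"

end

theory Submission imports Defs begin


lemma abs_cube_deriv: "((\<lambda>x::real. \<bar>x\<bar>^3) has_real_derivative 3*x*\<bar>x\<bar>) (at x)"
proof (cases "x = 0")
  case False
  show ?thesis
  proof (cases "x > 0")
    case True
    have "((\<lambda>x::real. x^3) has_real_derivative 3*x*\<bar>x\<bar>) (at x)"
      using True by (auto intro!: derivative_eq_intros simp: power2_eq_square)
    then show ?thesis
      by (rule has_field_derivative_transform_within[where d=x]) (use True in \<open>auto simp: dist_real_def\<close>)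
  next
    case False
    with \<open>x \<noteq> 0\<close> have n: "x < 0" by simp
    have "((\<lambda>x::real. -(x^3)) has_real_derivative 3*x*\<bar>x\<bar>) (at x)"
      using n by (auto intro!: derivative_eq_intros simp: power2_eq_square)
    then show ?thesis
      by (rule has_field_derivative_transform_within[where d="-x"]) (use n in \<open>auto simp: dist_real_def abs_if\<close>)
  qed
next
  case True
  have l0: "((\<lambda>h::real. h * \<bar>h\<bar>) \<longlongrightarrow> 0) (at 0)"
    using tendsto_mult[OF tendsto_ident_at tendsto_rabs[OF tendsto_ident_at], of 0 UNIV] by simp
  have ev: "\<forall>\<^sub>F h in at 0. h * \<bar>h\<bar> = (\<bar>0 + h\<bar>^3 - \<bar>0\<bar>^3) / (h::real)"
    unfolding eventually_at_filter
    by (rule always_eventually) (auto simp: power3_eq_cube abs_mult_self_eq field_simps)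
  have "((\<lambda>h::real. (\<bar>0 + h\<bar>^3 - \<bar>0\<bar>^3) / h) \<longlongrightarrow> 0) (at 0)"
    by (rule Lim_transform_eventually[OF l0 ev])
  then show ?thesis using True by (simp add: DERIV_def)
qed

lemma loss_deriv_g:
  fixes A :: "real^'n^'m" and Y :: "real^'l^'m" and g :: "real^'n" and V :: "real^'l^'n"
  shows "((\<lambda>u. loss A Y (vupd g l u) V) has_real_derivative
     (\<Sum>i\<in>UNIV. \<Sum>j\<in>UNIV. 2 * (Y - A ** Xmat (vupd g l u) V)$i$j * (- (A$i$l * (2*u) * V$l$j)))) (at u)"
proof -
  have c: "((\<lambda>u. (Y - A ** Xmat (vupd g l u) V)$i$j) has_real_derivative (- (A$i$l * (2*u) * V$l$j))) (at u)" for i j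
  proof -
    have e: "(\<lambda>u. (Y - A ** Xmat (vupd g l u) V)$i$j) = (\<lambda>u. Y$i$j - (\<Sum>k\<in>UNIV. A$i$k * ((if k = l then u else g$k)^2 * V$k$j)))"
      by (simp add: matrix_matrix_mult_def Xmat_def vupd_def)
    have d: "((\<lambda>u. A$i$k * ((if k = l then u else g$k)^2 * V$k$j)) has_real_derivative (if k = l then A$i$l * (2*u) * V$l$j else 0)) (at u)" for k
      by (cases "k = l") (auto intro!: derivative_eq_intros)
    have "((\<lambda>u. Y$i$j - (\<Sum>k\<in>UNIV. A$i$k * ((if k = l then u else g$k)^2 * V$k$j))) has_real_derivative
       0 - (\<Sum>k\<in>UNIV. (if k = l then A$i$l * (2*u) * V$l$j else 0))) (at u)"
      by (intro derivative_intros DERIV_sum d)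
    then show ?thesis unfolding e by simp
  qed
  show ?thesis unfolding loss_def
  proof (intro DERIV_sum)
    fix i j
    show "((\<lambda>u. ((Y - A ** Xmat (vupd g l u) V)$i$j)^2) has_real_derivative 2 * (Y - A ** Xmat (vupd g l u) V)$i$j * (- (A$i$l * (2*u) * V$l$j))) (at u)"
      by (rule DERIV_cong[OF DERIV_power[OF c, of i j 2]]) (simp add: algebra_simps)
  qed
qed

lemma Xrow: "Xmat g V $ i = (g$i)^2 *\<^sub>R (V$i)"
  by (simp add: Xmat_def vec_eq_iff)

lemma norm_sq_vec: "(norm (x::real^'l))^2 = (\<Sum>j\<in>UNIV. (x$j)^2)"
  unfolding power2_norm_eq_inner inner_vec_def by (simp add: power2_eq_square)

lemma inner_row: "(transpose A ** R) $ i \<bullet> v = (\<Sum>j\<in>UNIV. (\<Sum>k\<in>UNIV. A$k$i * R$k$j) * v$j)"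
  by (simp add: inner_vec_def matrix_matrix_mult_def transpose_def)

theorem lemma5p3:
  fixes A :: "real^'n^'m" and Y :: "real^'l^'m"
    and g :: "real \<Rightarrow> real^'n" and V :: "real \<Rightarrow> real^'l^'n"
  assumes flow: "gradient_flow A Y g V"
    and balanced: "\<And>t i. t \<ge> 0 \<Longrightarrow> (1/2) * (g t $ i)^2 = (\<Sum>j\<in>UNIV. (V t $ i $ j)^2)"
    and t: "t \<ge> 0"
  shows "((\<lambda>s. norm (Xmat (g s) (V s) $ i)) has_real_derivative
           2 powr (2/3) * 6
             * (((transpose A ** (Y - A ** Xmat (g t) (V t))) $ i) \<bullet> xhat (Xmat (g t) (V t) $ i))
             * norm (Xmat (g t) (V t) $ i) powr (4/3))
         (at t within {0..})"
proof -
  define R where "R = Y - A ** Xmat (g t) (V t)"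
  define G where "G = g t $ i"
  define v where "v = V t $ i"
  define c where "c = (transpose A ** R) $ i \<bullet> v"
  have vg: "vupd (g t) i (g t $ i) = g t" by (simp add: vupd_def vec_eq_iff)
  have "deriv (\<lambda>u. loss A Y (vupd (g t) i u) (V t)) (g t $ i)
     = (\<Sum>i'\<in>UNIV. \<Sum>j\<in>UNIV. 2 * R$i'$j * (- (A$i'$i * (2*G) * v$j)))"
    using DERIV_imp_deriv[OF loss_deriv_g[where A=A and Y=Y and g="g t" and l=i and u="g t $ i" and V="V t"]]
    unfolding vg R_def G_def v_def .
  also have "\<dots> = -4 * G * c"
  proof -
    have "(\<Sum>i'\<in>UNIV. \<Sum>j\<in>UNIV. 2 * R$i'$j * (- (A$i'$i * (2*G) * v$j)))
        = (\<Sum>i'\<in>UNIV. \<Sum>j\<in>UNIV. (-4*G) * (A$i'$i * R$i'$j * v$j))"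
      by (simp add: algebra_simps)
    also have "\<dots> = (-4*G) * (\<Sum>i'\<in>UNIV. \<Sum>j\<in>UNIV. A$i'$i * R$i'$j * v$j)"
      by (simp add: sum_distrib_left)
    also have "\<dots> = (-4*G) * (\<Sum>j\<in>UNIV. \<Sum>i'\<in>UNIV. A$i'$i * R$i'$j * v$j)"
      by (subst sum.swap) (rule refl)
    also have "\<dots> = -4 * G * c"
      unfolding c_def inner_row by (simp add: sum_distrib_right)
    finally show ?thesis .
  qed
  finally have dv: "deriv (\<lambda>u. loss A Y (vupd (g t) i u) (V t)) (g t $ i) = -4 * G * c" .
  have dG: "((\<lambda>s. g s $ i) has_real_derivative 4 * G * c) (at t within {0..})"
  proof -
    have "((\<lambda>s. g s $ i) has_real_derivative - deriv (\<lambda>u. loss A Y (vupd (g t) i u) (V t)) (g t $ i)) (at t within {0..})"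
      using flow t unfolding gradient_flow_def by blast
    then show ?thesis unfolding dv by simp
  qed
  have nX: "norm (Xmat (g s) (V s) $ i) = \<bar>g s $ i\<bar>^3 / sqrt 2" if "s \<ge> 0" for s
  proof -
    have "(norm (V s $ i))^2 = (g s $ i)^2 / 2"
      using balanced[OF that, of i] norm_sq_vec[of "V s $ i"] by simp
    then have "norm (V s $ i) = sqrt ((g s $ i)^2 / 2)"
      by (metis norm_ge_zero real_sqrt_abs abs_of_nonneg)
    also have "\<dots> = \<bar>g s $ i\<bar> / sqrt 2" by (simp add: real_sqrt_divide)
    finally have "norm (V s $ i) = \<bar>g s $ i\<bar> / sqrt 2" .
    then have "norm (Xmat (g s) (V s) $ i) = \<bar>g s $ i\<bar>^2 * (\<bar>g s $ i\<bar> / sqrt 2)"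
      unfolding Xrow norm_scaleR by simp
    then show ?thesis by (simp add: power2_eq_square power3_eq_cube)
  qed
  have d1: "((\<lambda>s. \<bar>g s $ i\<bar>^3 / sqrt 2) has_real_derivative (3 * G * \<bar>G\<bar> * (4 * G * c)) / sqrt 2) (at t within {0..})"
    using DERIV_cdivide[OF DERIV_chain2[OF abs_cube_deriv[of "g t $ i"] dG], of "sqrt 2"] by (simp add: G_def)
  have d2: "((\<lambda>s. norm (Xmat (g s) (V s) $ i)) has_real_derivative (3 * G * \<bar>G\<bar> * (4 * G * c)) / sqrt 2) (at t within {0..})"
    by (rule has_field_derivative_transform_within[OF d1, where d=1]) (use t nX in auto)
  have eq: "(3 * G * \<bar>G\<bar> * (4 * G * c)) / sqrt 2 = 2 powr (2/3) * 6
             * (((transpose A ** (Y - A ** Xmat (g t) (V t))) $ i) \<bullet> xhat (Xmat (g t) (V t) $ i))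
             * norm (Xmat (g t) (V t) $ i) powr (4/3)"
  proof (cases "G = 0")
    case True
    then have "Xmat (g t) (V t) $ i = 0" by (simp add: Xrow G_def)
    then show ?thesis using True by (simp add: xhat_def)
  next
    case False
    have nx: "norm (Xmat (g t) (V t) $ i) = \<bar>G\<bar>^3 / sqrt 2" using nX[OF t] G_def by simp
    then have nz: "Xmat (g t) (V t) $ i \<noteq> 0" using False by auto
    have xh: "xhat (Xmat (g t) (V t) $ i) = (G^2 / (\<bar>G\<bar>^3 / sqrt 2)) *\<^sub>R v"
      unfolding xhat_def using nz nx by (simp add: Xrow G_def v_def)
    have p1: "(\<bar>G\<bar>^3 / sqrt 2) powr (4/3) = \<bar>G\<bar>^4 / 2 powr (2/3)"
    proof -
      have gp: "\<bar>G\<bar> > 0" using False by simp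
      have a: "(\<bar>G\<bar>^3 / sqrt 2) powr (4/3) = (\<bar>G\<bar>^3) powr (4/3) / (sqrt 2) powr (4/3)"
        by (rule powr_divide)
      have b: "(\<bar>G\<bar>^3) powr (4/3) = \<bar>G\<bar>^4"
      proof -
        have "(\<bar>G\<bar>^3) powr (4/3) = (\<bar>G\<bar> powr 3) powr (4/3)"
          using gp by (simp add: powr_realpow)
        also have "\<dots> = \<bar>G\<bar> powr 4" by (simp only: powr_powr) simp
        also have "\<dots> = \<bar>G\<bar>^4" using powr_realpow[OF gp, of 4] by (simp only: of_nat_numeral)
        finally show ?thesis .
      qed
      have c2: "(sqrt 2) powr (4/3) = 2 powr (2/3)"
      proof -
        have "sqrt 2 = 2 powr (1/2)" by (simp add: powr_half_sqrt)
        then have "(sqrt 2) powr (4/3) = 2 powr (1/2 * (4/3))" by (simp add: powr_powr)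
        then show ?thesis by simp
      qed
      show ?thesis using a b c2 by simp
    qed
    show ?thesis
    proof -
      have gp: "\<bar>G\<bar> > 0" using False by simp
      have s2: "sqrt 2 * sqrt 2 = (2::real)" by simp
      have p23: "2 powr (2/3) > (0::real)" by simp
      have GG: "G^2 = \<bar>G\<bar>^2" by simp
      have e1: "3 * G * \<bar>G\<bar> * (4 * G * c) = 12 * \<bar>G\<bar>^3 * c"
        by (cases "G \<ge> 0") (simp_all add: power3_eq_cube algebra_simps)
      have e2: "\<bar>G\<bar>^2 / (\<bar>G\<bar>^3 / sqrt 2) = sqrt 2 / \<bar>G\<bar>"
        using gp by (simp add: power2_eq_square power3_eq_cube divide_simps)
      have e3: "2 powr (2/3) * 6 * (sqrt 2 / \<bar>G\<bar> * c) * (\<bar>G\<bar>^4 / 2 powr (2/3)) = 6 * sqrt 2 * \<bar>G\<bar>^3 * c"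
        using gp p23 by (simp add: power3_eq_cube power4_eq_xxxx divide_simps)
      have e4: "12 * \<bar>G\<bar>^3 * c / sqrt 2 = 6 * sqrt 2 * \<bar>G\<bar>^3 * c"
        using s2 by (simp add: divide_simps)
      show ?thesis unfolding nx xh p1 R_def[symmetric] inner_scaleR_right c_def[symmetric] e1 GG e2 e3 e4 ..
    qed
  qed
  show ?thesis using d2 unfolding eq .
qed

end
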